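(* Let $d\geq1$, let $\hat\rho$ be a $d\times d$ density operator with eigenvalues $\hat r_1,\dots,\hat r_d$ and eigenvalue decomposition $\hat\rho=\sum_i\hat r_i|b_i\rangle\!\langle b_i|$, and fix $p_\rho>0$. Then the problem maximize $\sum_{i=1}^d\hat r_is_i+p_\rho\sqrt{1-\sum_{i=1}^ds_i^2}$ over $(s_1,\dots,s_d)\in\mathbb R^d$ subject to $\sum_{i=1}^ds_i=1$ and $\sum_{i=1}^ds_i^2\leq1$ has a unique solution. Its optimal value is $$\frac1d\left(1+\sqrt{d-1}\sqrt{d\big(p_\rho^2+\mathrm{Tr}(\hat\rho^2)\big)-1}\right),$$ and the optimal array is $s_i^\sharp=\frac1d+c\,(\hat r_i-\frac1d)$ with $c=\sqrt{\frac{d-1}{d(p_\rho^2+\mathrm{Tr}(\hat\rho^2))-1}}$, i.e. it corresponds to the matrix $$\sigma^\sharp=\sum_i s_i^\sharp|b_i\rangle\!\langle b_i|=\frac1d\mathbb 1+\sqrt{\frac{d-1}{d(p_\rho^2+\mathrm{Tr}(\hat\rho^2))-1}}\Big(\hat\rho-\frac1d\mathbb 1\Big).$$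
   Context: $\mathbb 1$ denotes the $d\times d$ identity matrix. *)

theory Defs
  imports "Jordan_Normal_Form.Matrix"
begin

definition cinner :: "complex vec \<Rightarrow> complex vec \<Rightarrow> complex" where
  "cinner v w = (\<Sum>i<dim_vec v. cnj (vec_index v i) * vec_index w i)"

definition mat_trace :: "complex mat \<Rightarrow> complex" where
  "mat_trace A = (\<Sum>i<dim_row A. A $$ (i,i))"

definition density_operator :: "nat \<Rightarrow> complex mat \<Rightarrow> bool" where
  "density_operator d A \<longleftrightarrow> A \<in> carrier_mat d d
     \<and> (\<forall>i<d. \<forall>j<d. A $$ (i,j) = cnj (A $$ (j,i)))
     \<and> (\<forall>v \<in> carrier_vec d. 0 \<le> Re (cinner v (A *\<^sub>v v)))
     \<and> mat_trace A = 1"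

text \<open>The matrix sum_k w_k |b_k><b_k| for k = 0..d-1.\<close>
definition spectral_sum :: "nat \<Rightarrow> (nat \<Rightarrow> real) \<Rightarrow> (nat \<Rightarrow> complex vec) \<Rightarrow> complex mat" where
  "spectral_sum d w b = mat d d (\<lambda>(i,j). \<Sum>k<d. complex_of_real (w k) * (b k $ i) * cnj (b k $ j))"

definition feasible :: "nat \<Rightarrow> real vec \<Rightarrow> bool" where
  "feasible d s \<longleftrightarrow> s \<in> carrier_vec d \<and> (\<Sum>i<d. s $ i) = 1 \<and> (\<Sum>i<d. (s $ i)^2) \<le> 1"

definition objective :: "nat \<Rightarrow> (nat \<Rightarrow> real) \<Rightarrow> real \<Rightarrow> real vec \<Rightarrow> real" where
  "objective d r p s = (\<Sum>i<d. r i * s $ i) + p * sqrt (1 - (\<Sum>i<d. (s $ i)^2))"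

end

theory Submission
  imports Defs "Jordan_Normal_Form.Determinant"
begin
lemma sq_shift:
  fixes f :: "nat \<Rightarrow> real"
  assumes "d \<ge> 1" "(\<Sum>i<d. f i) = 1"
  shows "(\<Sum>i<d. (f i - 1/real d)^2) = (\<Sum>i<d. (f i)^2) - 1/real d"
proof -
  have "(\<Sum>i<d. (f i - 1/real d)^2) = (\<Sum>i<d. (f i)^2 - 2/real d * f i + 1/(real d)^2)"
    by (rule sum.cong) (auto simp: power2_eq_square field_simps)
  also have "\<dots> = (\<Sum>i<d. (f i)^2) - 2/real d * (\<Sum>i<d. f i) + real d/(real d)^2"
    by (simp add: sum.distrib sum_subtractf sum_distrib_left)
  finally show ?thesis using assms by (simp add: power2_eq_square field_simps)
qed

lemma prod_shift:
  fixes f g :: "nat \<Rightarrow> real"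
  assumes "d \<ge> 1" "(\<Sum>i<d. f i) = 1" "(\<Sum>i<d. g i) = 1"
  shows "(\<Sum>i<d. (f i - 1/real d) * (g i - 1/real d)) = (\<Sum>i<d. f i * g i) - 1/real d"
proof -
  have "(\<Sum>i<d. (f i - 1/real d) * (g i - 1/real d)) = (\<Sum>i<d. f i * g i - 1/real d * f i - 1/real d * g i + 1/(real d)^2)"
    by (rule sum.cong) (auto simp: power2_eq_square field_simps)
  also have "\<dots> = (\<Sum>i<d. f i * g i) - 1/real d * (\<Sum>i<d. f i) - 1/real d * (\<Sum>i<d. g i) + real d/(real d)^2"
    by (simp add: sum.distrib sum_subtractf sum_distrib_left)
  also have "real d/(real d)^2 = 1/real d" using assms by (simp add: power2_eq_square)
  finally show ?thesis using assms by simp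
qed

lemma core:
  fixes d :: nat and r s :: "nat \<Rightarrow> real" and p T c :: real
  assumes d1: "d \<ge> 2" and sr: "(\<Sum>i<d. r i) = 1" and T: "T = (\<Sum>i<d. (r i)^2)" and p: "p > 0"
    and ss: "(\<Sum>i<d. s i) = 1" and sq: "(\<Sum>i<d. (s i)^2) \<le> 1"
    and c: "c = sqrt ((real d - 1) / (real d * (p\<^sup>2 + T) - 1))"
  shows "(\<Sum>i<d. r i * s i) + p * sqrt (1 - (\<Sum>i<d. (s i)^2)) \<le> 1/real d + c * (T - 1/real d + p^2)"
    and "(\<Sum>i<d. r i * s i) + p * sqrt (1 - (\<Sum>i<d. (s i)^2)) = 1/real d + c * (T - 1/real d + p^2)
         \<Longrightarrow> \<forall>i<d. s i = 1/real d + c * (r i - 1/real d)"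
proof -
  define A where "A = T - 1/real d"
  define N where "N = A + p^2"
  define R where "R = 1 - 1/real d"
  define X where "X = (\<Sum>i<d. (s i - 1/real d) * (r i - 1/real d)) + p * sqrt (1 - (\<Sum>i<d. (s i)^2))"
  define y where "y = sqrt (1 - (\<Sum>i<d. (s i)^2))"
  have dpos: "real d \<ge> 2" using d1 by simp
  have Aeq: "A = (\<Sum>i<d. (r i - 1/real d)^2)" using sq_shift[of d r] sr d1 T A_def by simp
  have A0: "A \<ge> 0" unfolding Aeq by (intro sum_nonneg) auto
  have Npos: "N > 0" using A0 p N_def by (simp add: add_nonneg_pos)
  have "1/real d < 1" using dpos by simp
  hence Rpos: "R > 0" using R_def by simp
  have den: "real d * (p\<^sup>2 + T) - 1 = real d * N" using dpos by (simp add: N_def A_def field_simps)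
  have num: "real d - 1 = real d * R" using dpos by (simp add: R_def field_simps)
  have c2: "c = sqrt (R / N)" using c den num dpos by simp
  have cpos: "c > 0" using c2 Rpos Npos by simp
  have cc: "c^2 * N = R" using c2 Rpos Npos by simp
  have y0: "y \<ge> 0" using y_def sq by simp
  have tsq: "(\<Sum>i<d. (s i - 1/real d)^2) = (\<Sum>i<d. (s i)^2) - 1/real d" using sq_shift[of d s] ss d1 by simp
  have y2: "y^2 = R - (\<Sum>i<d. (s i - 1/real d)^2)" using sq y_def tsq R_def by simp
  have rs: "(\<Sum>i<d. r i * s i) = 1/real d + (\<Sum>i<d. (s i - 1/real d) * (r i - 1/real d))"
    using prod_shift[of d s r] ss sr d1 by (simp add: mult.commute)
  have obj: "(\<Sum>i<d. r i * s i) + p * sqrt (1 - (\<Sum>i<d. (s i)^2)) = 1/real d + X"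
    using rs X_def by simp
  define S where "S = (\<Sum>i<d. (s i - 1/real d - c * (r i - 1/real d))^2) + (y - c*p)^2"
  have "(\<Sum>i<d. (s i - 1/real d - c * (r i - 1/real d))^2)
      = (\<Sum>i<d. (s i - 1/real d)^2 - 2*c*((s i - 1/real d) * (r i - 1/real d)) + c^2 * (r i - 1/real d)^2)"
    by (rule sum.cong) (auto simp: power2_eq_square algebra_simps)
  also have "\<dots> = (\<Sum>i<d. (s i - 1/real d)^2) - 2*c*(\<Sum>i<d. (s i - 1/real d) * (r i - 1/real d)) + c^2 * A"
    by (simp add: sum.distrib sum_subtractf sum_distrib_left Aeq)
  finally have "S = (\<Sum>i<d. (s i - 1/real d)^2) - 2*c*(\<Sum>i<d. (s i - 1/real d) * (r i - 1/real d)) + c^2 * A + (y - c*p)^2"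
    using S_def by simp
  also have "\<dots> = 2*R - 2*c*X"
    using y2 cc unfolding X_def y_def[symmetric] N_def by (simp add: power2_eq_square algebra_simps)
  finally have SX: "S = 2*R - 2*c*X" .
  have S0: "S \<ge> 0" unfolding S_def by (intro add_nonneg_nonneg sum_nonneg) auto
  have cN: "c * N = R / c" using cc cpos by (simp add: field_simps power2_eq_square)
  have "c * X \<le> c * (c * N)" using S0 SX cc by (simp add: power2_eq_square algebra_simps)
  hence "X \<le> c * N" using cpos by simp
  thus "(\<Sum>i<d. r i * s i) + p * sqrt (1 - (\<Sum>i<d. (s i)^2)) \<le> 1/real d + c * (T - 1/real d + p^2)"
    using obj N_def A_def by simp
  assume "(\<Sum>i<d. r i * s i) + p * sqrt (1 - (\<Sum>i<d. (s i)^2)) = 1/real d + c * (T - 1/real d + p^2)"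
  hence "X = c * N" using obj N_def A_def by simp
  hence "S = 0" using SX cc by (simp add: power2_eq_square algebra_simps)
  hence "(\<Sum>i<d. (s i - 1/real d - c * (r i - 1/real d))^2) = 0"
    unfolding S_def by (smt (verit) sum_nonneg zero_le_power2)
  hence "\<forall>i\<in>{..<d}. (s i - 1/real d - c * (r i - 1/real d))^2 = 0"
    by (subst (asm) sum_nonneg_eq_0_iff) auto
  thus "\<forall>i<d. s i = 1/real d + c * (r i - 1/real d)" by (auto simp: algebra_simps)
qed

lemma s0props:
  fixes d :: nat and r :: "nat \<Rightarrow> real" and p T c :: real
  assumes d1: "d \<ge> 1" and sr: "(\<Sum>i<d. r i) = 1" and T: "T = (\<Sum>i<d. (r i)^2)" and p: "p > 0"
    and c: "c = sqrt ((real d - 1) / (real d * (p\<^sup>2 + T) - 1))"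
    and s0: "s0 = (\<lambda>i. 1/real d + c * (r i - 1/real d))"
  shows "(\<Sum>i<d. s0 i) = 1" "(\<Sum>i<d. (s0 i)^2) \<le> 1"
    "(\<Sum>i<d. r i * s0 i) + p * sqrt (1 - (\<Sum>i<d. (s0 i)^2)) = 1/real d + c * (T - 1/real d + p^2)"
    "1/real d + c * (T - 1/real d + p^2) = (1 + sqrt (real d - 1) * sqrt (real d * (p\<^sup>2 + T) - 1)) / real d"
proof -
  define A where "A = T - 1/real d"
  define N where "N = A + p^2"
  define R where "R = 1 - 1/real d"
  have dpos: "real d \<ge> 1" using d1 by simp
  have Aeq: "A = (\<Sum>i<d. (r i - 1/real d)^2)" using sq_shift[of d r] sr d1 T A_def by simp
  have A0: "A \<ge> 0" unfolding Aeq by (intro sum_nonneg) auto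
  have Npos: "N > 0" using A0 p N_def by (simp add: add_nonneg_pos)
  have R0: "R \<ge> 0" using dpos R_def by simp
  have den: "real d * (p\<^sup>2 + T) - 1 = real d * N" using dpos by (simp add: N_def A_def field_simps)
  have num: "real d - 1 = real d * R" using dpos by (simp add: R_def field_simps)
  have c2: "c = sqrt (R / N)" using c den num dpos by simp
  have c0: "c \<ge> 0" using c2 R0 Npos by simp
  have cc: "c^2 * N = R" using c2 R0 Npos by simp
  have sum1: "(\<Sum>i<d. s0 i) = 1"
  proof -
    have "(\<Sum>i<d. s0 i) = (\<Sum>i<d. 1/real d + c * r i - c / real d)"
      unfolding s0 by (rule sum.cong) (auto simp: algebra_simps)
    also have "\<dots> = real d / real d + c * (\<Sum>i<d. r i) - c * real d / real d"
      by (simp add: sum.distrib sum_subtractf sum_distrib_left)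
    finally show ?thesis using sr dpos by simp
  qed
  show "(\<Sum>i<d. s0 i) = 1" by (rule sum1)
  have "(\<Sum>i<d. (s0 i - 1/real d)^2) = (\<Sum>i<d. c^2 * (r i - 1/real d)^2)"
    unfolding s0 by (rule sum.cong) (auto simp: power_mult_distrib)
  also have "\<dots> = c^2 * A" by (simp add: Aeq sum_distrib_left)
  finally have "(\<Sum>i<d. (s0 i)^2) = 1/real d + c^2 * A" using sq_shift[of d s0] sum1 d1 by simp
  hence sq0: "1 - (\<Sum>i<d. (s0 i)^2) = (c*p)^2" using cc R_def N_def by (simp add: power_mult_distrib algebra_simps)
  show "(\<Sum>i<d. (s0 i)^2) \<le> 1" using sq0 by (smt (verit) zero_le_power2)
  have sqv: "sqrt (1 - (\<Sum>i<d. (s0 i)^2)) = c * p" using sq0 c0 p by simp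
  have "(\<Sum>i<d. (s0 i - 1/real d) * (r i - 1/real d)) = (\<Sum>i<d. c * (r i - 1/real d)^2)"
    unfolding s0 by (rule sum.cong) (auto simp: power2_eq_square)
  also have "\<dots> = c * A" by (simp add: Aeq sum_distrib_left)
  finally have "(\<Sum>i<d. r i * s0 i) = 1/real d + c * A"
    using prod_shift[of d s0 r] sum1 sr d1 by (simp add: mult.commute)
  thus "(\<Sum>i<d. r i * s0 i) + p * sqrt (1 - (\<Sum>i<d. (s0 i)^2)) = 1/real d + c * (T - 1/real d + p^2)"
    using sqv A_def by (simp add: power2_eq_square algebra_simps)
  have "c * (real d * N) = sqrt (real d - 1) * sqrt (real d * N)"
  proof -
    have dN: "real d * N > 0" using dpos Npos by simp
    have "c = sqrt (real d - 1) / sqrt (real d * N)" using c den by (simp add: real_sqrt_divide)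
    moreover have "real d * N = sqrt (real d * N) * sqrt (real d * N)" using dN by simp
    ultimately show ?thesis using dN by (metis (no_types, lifting) divide_eq_eq mult.assoc real_sqrt_gt_0_iff order_less_irrefl)
  qed
  hence "c * N = sqrt (real d - 1) * sqrt (real d * (p\<^sup>2 + T) - 1) / real d"
    using den dpos by (simp add: field_simps)
  thus "1/real d + c * (T - 1/real d + p^2) = (1 + sqrt (real d - 1) * sqrt (real d * (p\<^sup>2 + T) - 1)) / real d"
    using N_def A_def dpos by (simp add: add_divide_distrib)
qed

lemma completeness:
  fixes b :: "nat \<Rightarrow> complex vec"
  assumes bc: "\<forall>k<d. b k \<in> carrier_vec d"
    and on: "\<forall>k<d. \<forall>l<d. cinner (b k) (b l) = (if k = l then 1 else 0)"
    and ij: "i < d" "j < d"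
  shows "(\<Sum>k<d. b k $ i * cnj (b k $ j)) = (if i = j then 1 else 0)"
proof -
  have dims: "\<And>k. k<d \<Longrightarrow> dim_vec (b k) = d" using bc by auto
  define B where "B = mat d d (\<lambda>(i,k). b k $ i)"
  define BH where "BH = mat d d (\<lambda>(k,i). cnj (b k $ i))"
  have Bc: "B \<in> carrier_mat d d" and BHc: "BH \<in> carrier_mat d d" by (auto simp: B_def BH_def)
  have "BH * B = 1\<^sub>m d"
  proof (rule eq_matI)
    fix k l assume k: "k < dim_row (1\<^sub>m d :: complex mat)" and l: "l < dim_col (1\<^sub>m d :: complex mat)"
    hence kl: "k < d" "l < d" by auto
    have "(BH * B) $$ (k,l) = (\<Sum>i<d. cnj (b k $ i) * b l $ i)"
      using kl by (simp add: BH_def B_def scalar_prod_def lessThan_atLeast0)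
    also have "\<dots> = cinner (b k) (b l)" using dims kl by (simp add: cinner_def)
    finally show "(BH * B) $$ (k,l) = 1\<^sub>m d $$ (k,l)" using on kl by simp
  qed (auto simp: BH_def B_def)
  hence "B * BH = 1\<^sub>m d" using mat_mult_left_right_inverse[OF BHc Bc] by simp
  hence "(B * BH) $$ (i,j) = (if i = j then 1 else 0)" using ij by simp
  moreover have "(B * BH) $$ (i,j) = (\<Sum>k<d. b k $ i * cnj (b k $ j))"
    using ij by (simp add: BH_def B_def scalar_prod_def lessThan_atLeast0)
  ultimately show ?thesis by simp
qed

lemma trace_one:
  fixes b :: "nat \<Rightarrow> complex vec"
  assumes bc: "\<forall>k<d. b k \<in> carrier_vec d"
    and on: "\<forall>k<d. \<forall>l<d. cinner (b k) (b l) = (if k = l then 1 else 0)"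
  shows "mat_trace (spectral_sum d r b) = complex_of_real (\<Sum>k<d. r k)"
proof -
  have dims: "\<And>k. k<d \<Longrightarrow> dim_vec (b k) = d" using bc by auto
  have "mat_trace (spectral_sum d r b) = (\<Sum>i<d. \<Sum>k<d. complex_of_real (r k) * (b k $ i) * cnj (b k $ i))"
    by (simp add: mat_trace_def spectral_sum_def)
  also have "\<dots> = (\<Sum>k<d. \<Sum>i<d. complex_of_real (r k) * (cnj (b k $ i) * (b k $ i)))"
    by (subst sum.swap) (simp add: algebra_simps)
  also have "\<dots> = (\<Sum>k<d. complex_of_real (r k) * cinner (b k) (b k))"
    unfolding cinner_def by (intro sum.cong refl) (simp add: dims sum_distrib_left)
  also have "\<dots> = (\<Sum>k<d. complex_of_real (r k))" using on by simp
  finally show ?thesis by simp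
qed

lemma trace_sq:
  fixes b :: "nat \<Rightarrow> complex vec"
  assumes bc: "\<forall>k<d. b k \<in> carrier_vec d"
    and on: "\<forall>k<d. \<forall>l<d. cinner (b k) (b l) = (if k = l then 1 else 0)"
  shows "mat_trace (spectral_sum d r b * spectral_sum d r b) = complex_of_real (\<Sum>k<d. (r k)^2)"
proof -
  let ?f = "\<lambda>k i j. complex_of_real (r k) * (b k $ i) * cnj (b k $ j)"
  have "mat_trace (spectral_sum d r b * spectral_sum d r b)
      = (\<Sum>i<d. \<Sum>j<d. (\<Sum>k<d. ?f k i j) * (\<Sum>l<d. ?f l j i))"
    by (simp add: mat_trace_def spectral_sum_def scalar_prod_def lessThan_atLeast0)
  also have "\<dots> = (\<Sum>i<d. \<Sum>j<d. \<Sum>k<d. \<Sum>l<d. ?f k i j * ?f l j i)"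
    by (simp add: sum_product)
  also have "\<dots> = (\<Sum>i<d. \<Sum>k<d. \<Sum>j<d. \<Sum>l<d. ?f k i j * ?f l j i)"
    by (rule sum.cong[OF refl], rule sum.swap)
  also have "\<dots> = (\<Sum>k<d. \<Sum>i<d. \<Sum>j<d. \<Sum>l<d. ?f k i j * ?f l j i)"
    by (rule sum.swap)
  also have "\<dots> = (\<Sum>k<d. \<Sum>i<d. \<Sum>l<d. \<Sum>j<d. ?f k i j * ?f l j i)"
    by (rule sum.cong[OF refl], rule sum.cong[OF refl], rule sum.swap)
  also have "\<dots> = (\<Sum>k<d. \<Sum>l<d. \<Sum>i<d. \<Sum>j<d. ?f k i j * ?f l j i)"
    by (rule sum.cong[OF refl], rule sum.swap)
  also have "\<dots> = (\<Sum>k<d. \<Sum>l<d. complex_of_real (r k) * complex_of_real (r l) * cinner (b l) (b k) * cinner (b k) (b l))"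
  proof (intro sum.cong refl)
    fix k l assume "k \<in> {..<d}" "l \<in> {..<d}"
    hence kl: "dim_vec (b k) = d" "dim_vec (b l) = d" using bc by auto
    have "(\<Sum>i<d. \<Sum>j<d. ?f k i j * ?f l j i)
        = (\<Sum>i<d. \<Sum>j<d. (complex_of_real (r k) * complex_of_real (r l)) * (cnj (b l $ i) * b k $ i) * (cnj (b k $ j) * b l $ j))"
      by (intro sum.cong refl) (simp add: algebra_simps)
    also have "\<dots> = complex_of_real (r k) * complex_of_real (r l) * (\<Sum>i<d. cnj (b l $ i) * b k $ i) * (\<Sum>j<d. cnj (b k $ j) * b l $ j)"
      by (simp add: sum_product sum_distrib_left algebra_simps)
    finally show "(\<Sum>i<d. \<Sum>j<d. ?f k i j * ?f l j i) = complex_of_real (r k) * complex_of_real (r l) * cinner (b l) (b k) * cinner (b k) (b l)"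
      using kl by (simp add: cinner_def)
  qed
  also have "\<dots> = (\<Sum>k<d. \<Sum>l<d. if l = k then complex_of_real (r k) * complex_of_real (r k) else 0)"
    using on by (intro sum.cong refl) auto
  also have "\<dots> = (\<Sum>k<d. complex_of_real ((r k)^2))" by (simp add: power2_eq_square)
  finally show ?thesis by simp
qed

theorem lemma2:
  fixes d :: nat and \<rho> :: "complex mat" and r :: "nat \<Rightarrow> real"
    and b :: "nat \<Rightarrow> complex vec" and p :: real
  assumes "d \<ge> 1"
    and "density_operator d \<rho>"
    and "\<forall>k<d. b k \<in> carrier_vec d"
    and "\<forall>k<d. \<forall>l<d. cinner (b k) (b l) = (if k = l then 1 else 0)"
    and "\<rho> = spectral_sum d r b"
    and "p > 0"
  shows
    "let T = Re (mat_trace (\<rho> * \<rho>));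
         c = sqrt ((real d - 1) / (real d * (p\<^sup>2 + T) - 1));
         s0 = vec d (\<lambda>i. 1 / real d + c * (r i - 1 / real d))
     in feasible d s0
        \<and> (\<forall>s. feasible d s \<longrightarrow> objective d r p s \<le> objective d r p s0)
        \<and> (\<forall>s. feasible d s \<and> objective d r p s = objective d r p s0 \<longrightarrow> s = s0)
        \<and> objective d r p s0
            = (1 + sqrt (real d - 1) * sqrt (real d * (p\<^sup>2 + T) - 1)) / real d
        \<and> spectral_sum d (\<lambda>i. s0 $ i) b
            = (1 / complex_of_real (real d)) \<cdot>\<^sub>m 1\<^sub>m d
              + complex_of_real c \<cdot>\<^sub>m (\<rho> - (1 / complex_of_real (real d)) \<cdot>\<^sub>m 1\<^sub>m d)"
proof -
  note d1 = assms(1) and bc = assms(3) and on = assms(4) and rho = assms(5) and p = assms(6)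
  have "mat_trace \<rho> = 1" using assms(2) by (simp add: density_operator_def)
  hence "complex_of_real (\<Sum>k<d. r k) = 1" using trace_one[OF bc on, of r] rho by simp
  hence sr: "(\<Sum>k<d. r k) = 1" by (metis of_real_eq_1_iff)
  define T where "T = Re (mat_trace (\<rho> * \<rho>))"
  have T: "T = (\<Sum>k<d. (r k)^2)" using trace_sq[OF bc on, of r] rho T_def by simp
  define c where "c = sqrt ((real d - 1) / (real d * (p\<^sup>2 + T) - 1))"
  define f where "f = (\<lambda>i. 1 / real d + c * (r i - 1 / real d))"
  define s0 where "s0 = vec d f"
  have s0i: "\<And>i. i < d \<Longrightarrow> s0 $ i = f i" by (simp add: s0_def)
  have sumf: "\<And>g :: real \<Rightarrow> real. (\<Sum>i<d. g (s0 $ i)) = (\<Sum>i<d. g (f i))"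
    by (intro sum.cong refl) (simp add: s0i)
  have P: "(\<Sum>i<d. f i) = 1" "(\<Sum>i<d. (f i)^2) \<le> 1"
    "(\<Sum>i<d. r i * f i) + p * sqrt (1 - (\<Sum>i<d. (f i)^2)) = 1/real d + c * (T - 1/real d + p^2)"
    "1/real d + c * (T - 1/real d + p^2) = (1 + sqrt (real d - 1) * sqrt (real d * (p\<^sup>2 + T) - 1)) / real d"
    using s0props[OF d1 sr T p c_def f_def] by auto
  have rsum: "(\<Sum>i<d. r i * s0 $ i) = (\<Sum>i<d. r i * f i)"
    by (intro sum.cong refl) (simp add: s0i)
  have feas0: "feasible d s0" using P sumf[of "\<lambda>x. x"] sumf[of "\<lambda>x. x^2"]
    by (simp add: feasible_def s0_def)
  have obj0: "objective d r p s0 = 1/real d + c * (T - 1/real d + p^2)"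
    using P(3) rsum sumf[of "\<lambda>x. x^2"] by (simp add: objective_def)
  have opt: "objective d r p s \<le> objective d r p s0 \<and>
             (objective d r p s = objective d r p s0 \<longrightarrow> s = s0)" if fs: "feasible d s" for s
  proof (cases "d = 1")
    case True
    have sc: "s \<in> carrier_vec 1" and s1: "s $ 0 = 1" using fs True by (auto simp: feasible_def)
    have r1: "r 0 = 1" using sr True by simp
    have "objective d r p s = 1" using True s1 r1 by (simp add: objective_def)
    moreover have "objective d r p s0 = 1" using True obj0 c_def by simp
    moreover have "s = s0"
      by (rule eq_vecI) (use sc s1 True r1 in \<open>auto simp: s0_def f_def\<close>)
    ultimately show ?thesis by simp
  next
    case False
    hence d2: "d \<ge> 2" using d1 by simp
    have ss: "(\<Sum>i<d. s $ i) = 1" "(\<Sum>i<d. (s $ i)^2) \<le> 1" and sc: "s \<in> carrier_vec d"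
      using fs by (auto simp: feasible_def)
    note C = core[OF d2 sr T p ss c_def]
    show ?thesis
    proof
      show "objective d r p s \<le> objective d r p s0" using C(1) obj0 by (simp add: objective_def)
      show "objective d r p s = objective d r p s0 \<longrightarrow> s = s0"
      proof
        assume "objective d r p s = objective d r p s0"
        hence "\<forall>i<d. s $ i = f i" using C(2) obj0 by (simp add: objective_def f_def)
        thus "s = s0" using sc by (intro eq_vecI) (auto simp: s0_def)
      qed
    qed
  qed
  have matid: "spectral_sum d (\<lambda>i. s0 $ i) b
            = (1 / complex_of_real (real d)) \<cdot>\<^sub>m 1\<^sub>m d
              + complex_of_real c \<cdot>\<^sub>m (\<rho> - (1 / complex_of_real (real d)) \<cdot>\<^sub>m 1\<^sub>m d)"
  proof (rule eq_matI)
    fix i j assume "i < dim_row ((1 / complex_of_real (real d)) \<cdot>\<^sub>m 1\<^sub>m d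
              + complex_of_real c \<cdot>\<^sub>m (\<rho> - (1 / complex_of_real (real d)) \<cdot>\<^sub>m 1\<^sub>m d))"
      "j < dim_col ((1 / complex_of_real (real d)) \<cdot>\<^sub>m 1\<^sub>m d
              + complex_of_real c \<cdot>\<^sub>m (\<rho> - (1 / complex_of_real (real d)) \<cdot>\<^sub>m 1\<^sub>m d))"
    hence ij: "i < d" "j < d" by auto
    define e where "e = (\<Sum>k<d. b k $ i * cnj (b k $ j))"
    have e: "e = (if i = j then 1 else 0)" using completeness[OF bc on ij] e_def by simp
    define u where "u = complex_of_real (1 / real d) * (1 - complex_of_real c)"
    have "spectral_sum d (\<lambda>i. s0 $ i) b $$ (i,j)
        = (\<Sum>k<d. u * (b k $ i * cnj (b k $ j)) + complex_of_real c * (complex_of_real (r k) * b k $ i * cnj (b k $ j)))"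
      unfolding spectral_sum_def using ij
    proof (simp, intro sum.cong refl)
      fix k assume "k \<in> {..<d}"
      hence "s0 $ k = f k" by (simp add: s0i)
      hence "s0 $ k = 1 / real d * (1 - c) + c * r k"
        by (simp add: f_def algebra_simps diff_divide_distrib)
      hence "complex_of_real (s0 $ k) = complex_of_real (1 / real d * (1 - c) + c * r k)"
        by (simp only:)
      hence "complex_of_real (s0 $ k) = u + complex_of_real c * complex_of_real (r k)"
        unfolding u_def by (simp only: of_real_add of_real_mult of_real_diff of_real_1)
      thus "complex_of_real (s0 $ k) * b k $ i * cnj (b k $ j) = u * (b k $ i * cnj (b k $ j)) + complex_of_real c * (complex_of_real (r k) * b k $ i * cnj (b k $ j))"
        by (simp add: f_def u_def algebra_simps)
    qed
    also have "\<dots> = u * e + complex_of_real c * \<rho> $$ (i,j)"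
      using ij rho by (simp add: sum.distrib sum_distrib_left e_def spectral_sum_def)
    finally have LHS: "spectral_sum d (\<lambda>i. s0 $ i) b $$ (i,j) = u * e + complex_of_real c * \<rho> $$ (i,j)" .
    show "spectral_sum d (\<lambda>i. s0 $ i) b $$ (i,j) = ((1 / complex_of_real (real d)) \<cdot>\<^sub>m 1\<^sub>m d
              + complex_of_real c \<cdot>\<^sub>m (\<rho> - (1 / complex_of_real (real d)) \<cdot>\<^sub>m 1\<^sub>m d)) $$ (i,j)"
    proof -
      have R: "((1 / complex_of_real (real d)) \<cdot>\<^sub>m 1\<^sub>m d
              + complex_of_real c \<cdot>\<^sub>m (\<rho> - (1 / complex_of_real (real d)) \<cdot>\<^sub>m 1\<^sub>m d)) $$ (i,j)
          = (1 / complex_of_real (real d)) * e + complex_of_real c * (\<rho> $$ (i,j) - (1 / complex_of_real (real d)) * e)"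
        using ij e rho by (simp add: spectral_sum_def)
      have "u * e + complex_of_real c * \<rho> $$ (i,j)
          = (1 / complex_of_real (real d)) * e + complex_of_real c * (\<rho> $$ (i,j) - (1 / complex_of_real (real d)) * e)"
        unfolding u_def of_real_divide of_real_1 by (simp add: ring_distribs)
      thus ?thesis using LHS R by (simp only:)
    qed
  qed (use rho in \<open>auto simp: spectral_sum_def\<close>)
  have objv: "objective d r p s0 = (1 + sqrt (real d - 1) * sqrt (real d * (p\<^sup>2 + T) - 1)) / real d"
    using obj0 P(4) by simp
  have opt1: "\<forall>s. feasible d s \<longrightarrow> objective d r p s \<le> objective d r p s0" using opt by blast
  have opt2: "\<forall>s. feasible d s \<and> objective d r p s = objective d r p s0 \<longrightarrow> s = s0" using opt by blast
  have main: "feasible d s0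
        \<and> (\<forall>s. feasible d s \<longrightarrow> objective d r p s \<le> objective d r p s0)
        \<and> (\<forall>s. feasible d s \<and> objective d r p s = objective d r p s0 \<longrightarrow> s = s0)
        \<and> objective d r p s0
            = (1 + sqrt (real d - 1) * sqrt (real d * (p\<^sup>2 + T) - 1)) / real d
        \<and> spectral_sum d (\<lambda>i. s0 $ i) b
            = (1 / complex_of_real (real d)) \<cdot>\<^sub>m 1\<^sub>m d
              + complex_of_real c \<cdot>\<^sub>m (\<rho> - (1 / complex_of_real (real d)) \<cdot>\<^sub>m 1\<^sub>m d)"
    using feas0 opt1 opt2 objv matid by (intro conjI)
  then show ?thesis unfolding Let_def s0_def f_def c_def T_def .
qed

end
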